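(* Let $\tau$ be a $T_1$-topology on $\mathcal{C}(p,q)$ such that $(\mathcal{C}(p,q),\tau)$ is a semitopological semigroup. If there exists a point $q^ip^j\in\mathcal{C}(p,q)$ such that the subspace $\updownarrow_{\preceq}q^ip^j$ is semiregular at $q^ip^j$, then for every point $q^mp^n\in\mathcal{C}(p,q)$ the subspace $\updownarrow_{\preceq}q^mp^n$ is semiregular at $q^mp^n$.
   Context: The bicyclic monoid $\mathcal{C}(p,q)$ is the monoid generated by $p,q$ subject only to $pq=1$; elements are uniquely $q^ip^j$, $i,j\in\omega$, with multiplication $q^kp^l\cdot q^mp^n = q^{k-l+m}p^n$ if $l<m$, $=q^kp^n$ if $l=m$, $=q^kp^{l-m+n}$ if $l>m$. Natural partial order: $q^ip^j\preceq q^sp^t$ iff $i\ge s$ and $i-j=s-t$; $\updownarrow_{\preceq}x=\{y:x\preceq y\}\cup\{y:y\preceq x\}$. Semitopological semigroup: multiplication separately continuous. A subspace $Y$ is semiregular at $x\in Y$ if $x$ has a neighbourhood base in $Y$ of sets $U$ with $U=\mathrm{int}_Y(\mathrm{cl}_Y(U))$. *)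

theory Defs
  imports "HOL-Analysis.Analysis"
begin

text \<open>The bicyclic monoid C(p,q): the element q^i p^j is represented by the pair (i,j).\<close>

definition bc_mult :: "nat \<times> nat \<Rightarrow> nat \<times> nat \<Rightarrow> nat \<times> nat" where
  "bc_mult x y = (case x of (k,l) \<Rightarrow> case y of (m,n) \<Rightarrow>
      if l < m then (k + m - l, n)
      else if l = m then (k, n)
      else (k, l - m + n))"

definition bc_le :: "nat \<times> nat \<Rightarrow> nat \<times> nat \<Rightarrow> bool" where
  "bc_le x y = (case x of (i,j) \<Rightarrow> case y of (s,t) \<Rightarrow>
      i \<ge> s \<and> int i - int j = int s - int t)"

definition bc_updown :: "nat \<times> nat \<Rightarrow> (nat \<times> nat) set" where
  "bc_updown x = {y. bc_le x y} \<union> {y. bc_le y x}"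

definition semitopological_bc :: "(nat \<times> nat) topology \<Rightarrow> bool" where
  "semitopological_bc X \<longleftrightarrow> topspace X = UNIV \<and>
     (\<forall>a. continuous_map X X (\<lambda>x. bc_mult a x) \<and> continuous_map X X (\<lambda>x. bc_mult x a))"

definition semiregular_at :: "'a topology \<Rightarrow> 'a set \<Rightarrow> 'a \<Rightarrow> bool" where
  "semiregular_at X Y x \<longleftrightarrow> x \<in> Y \<and>
     (\<forall>W. openin (subtopology X Y) W \<and> x \<in> W \<longrightarrow>
        (\<exists>U. openin (subtopology X Y) U \<and> x \<in> U \<and> U \<subseteq> W \<and>
             U = (subtopology X Y) interior_of ((subtopology X Y) closure_of U)))"

end

theory Submission
  imports Defs
begin

lemma updown_eq: "bc_updown (i,j) = {(s,t). int s - int t = int i - int j}"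
  unfolding bc_updown_def bc_le_def by auto

lemma h_calc:
  assumes "int s - int t = int m - int n"
  shows "bc_mult (bc_mult (i,m) (s,t)) (n,j) = (if s \<le> m then (i,j) else (i+s-m, s-m+j))"
  using assms unfolding bc_mult_def by auto

lemma lam_fix: "m \<le> a \<Longrightarrow> bc_mult (m,m) (a,b) = (a,b)"
  unfolding bc_mult_def by auto

lemma lam_y: "i < s \<Longrightarrow> int s - int t = int i - int j \<Longrightarrow> bc_mult (s,s) (i,j) = (s,t)"
  unfolding bc_mult_def by auto

lemma lam_maps: "int a - int b = int i - int j \<Longrightarrow> bc_mult (s,s) (a,b) \<in> bc_updown (i,j)"
  unfolding bc_mult_def updown_eq by auto

lemma fin_below: "finite {x \<in> bc_updown (i,j). fst x < s}"
proof -
  have "{x \<in> bc_updown (i,j). fst x < s} \<subseteq> {..<s} \<times> {..<s+j}"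
    unfolding updown_eq by auto
  then show ?thesis by (rule finite_subset) auto
qed

lemma fin_below2: "finite {x \<in> bc_updown (i,j). fst x \<le> s}"
proof -
  have "{x \<in> bc_updown (i,j). fst x \<le> s} \<subseteq> {x \<in> bc_updown (i,j). fst x < Suc s}" by auto
  then show ?thesis using fin_below finite_subset by blast
qed

lemma closed_fin:
  assumes "t1_space X" "semitopological_bc X" "finite F"
  shows "closedin X F"
  using assms unfolding t1_space_closedin_finite semitopological_bc_def by auto

lemma step_C:
  assumes t1: "t1_space X" and st: "semitopological_bc X"
    and iso: "openin (subtopology X Y) {x}" and xY: "x \<in> Y"
  shows "semiregular_at X Y x"
proof -
  have cl: "closedin (subtopology X Y) {x}"
    using closed_fin[OF t1 st, of "{x}"] xY
    by (metis closedin_subtopology_Int_closed closedin_subtopology_refl inf.absorb_iff2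
        empty_subsetI insert_subset finite.emptyI finite.insertI topspace_subtopology)
  have "(subtopology X Y) interior_of ((subtopology X Y) closure_of {x}) = {x}"
    using cl iso by (simp add: closure_of_closedin interior_of_openin)
  then show ?thesis unfolding semiregular_at_def using iso xY by auto
qed


lemma step_B:
  assumes t1: "t1_space X" and st: "semitopological_bc X"
    and iso: "openin (subtopology X (bc_updown (i,j))) {(i,j)}"
  shows "openin (subtopology X (bc_updown (m,n))) {(m,n)}"
proof -
  obtain Op where Op: "openin X Op" "{(i,j)} = Op \<inter> bc_updown (i,j)"
    using iso openin_subtopology by metis
  define h where "h = (\<lambda>w. bc_mult (bc_mult (i,m) w) (n,j))"
  have top: "topspace X = UNIV" using st semitopological_bc_def by auto
  have "continuous_map X X h"
  proof -
    have "continuous_map X X (\<lambda>x. bc_mult (i,m) x)" "continuous_map X X (\<lambda>x. bc_mult x (n,j))"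
      using st semitopological_bc_def by auto
    from continuous_map_compose[OF this] show ?thesis unfolding h_def o_def .
  qed
  then have P: "openin X {w. h w \<in> Op}"
    using openin_continuous_map_preimage[OF _ Op(1), of X h] top by simp
  define S where "S = {x \<in> bc_updown (m,n). fst x \<le> m}"
  have finS: "finite S" unfolding S_def by (rule fin_below2)
  have key: "w \<in> bc_updown (m,n) \<Longrightarrow> (h w \<in> Op) = (w \<in> S)" for w
  proof -
    assume w: "w \<in> bc_updown (m,n)"
    obtain s t where st': "w = (s,t)" by force
    have e: "int s - int t = int m - int n" using w st' updown_eq by auto
    show ?thesis
    proof (cases "s \<le> m")
      case True
      then have "h w = (i,j)" using h_calc[OF e] st' h_def by auto
      then show ?thesis using Op(2) True st' w S_def by auto
    next
      case False
      then have hw: "h w = (i+s-m, s-m+j)" using h_calc[OF e] st' h_def by auto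
      have "h w \<in> bc_updown (i,j)" using hw False updown_eq by auto
      moreover have "h w \<noteq> (i,j)" using hw False by auto
      ultimately have "h w \<notin> Op" using Op(2) by auto
      then show ?thesis using False st' S_def by auto
    qed
  qed
  have mS: "(m,n) \<in> S" unfolding S_def updown_eq by auto
  have "openin X ({w. h w \<in> Op} - (S - {(m,n)}))"
    using P closed_fin[OF t1 st] finS by auto
  moreover have "{(m,n)} = ({w. h w \<in> Op} - (S - {(m,n)})) \<inter> bc_updown (m,n)"
    using key mS S_def by auto
  ultimately show ?thesis unfolding openin_subtopology by blast
qed

lemma step_A:
  assumes t1: "t1_space X" and st: "semitopological_bc X"
    and sr: "semiregular_at X (bc_updown (i,j)) (i,j)"
  shows "openin (subtopology X (bc_updown (i,j))) {(i,j)}"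
proof (rule ccontr)
  assume niso: "\<not> openin (subtopology X (bc_updown (i,j))) {(i,j)}"
  define Y where "Y = bc_updown (i,j)"
  define S where "S = subtopology X Y"
  have top: "topspace X = UNIV" using st semitopological_bc_def by auto
  have topS: "topspace S = Y" using top S_def by simp
  have yY: "(i,j) \<in> Y" unfolding Y_def updown_eq by auto
  have closedS: "finite F \<Longrightarrow> closedin S (F \<inter> Y)" for F
    using closed_fin[OF t1 st] S_def closedin_subtopology by blast
  have claim: "w \<in> S closure_of U"
    if U: "openin S U" "(i,j) \<in> U" and w: "w \<in> Y" "i < fst w" for U w
  proof -
    obtain Op where Op: "openin X Op" "U = Op \<inter> Y" using U S_def openin_subtopology by metis
    obtain s t where wst: "w = (s,t)" by force
    have e: "int s - int t = int i - int j" using w wst Y_def updown_eq by auto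
    have i_s: "i < s" using w wst by auto
    show ?thesis unfolding in_closure_of topS
    proof (intro conjI allI impI)
      show "w \<in> Y" using w by simp
      fix T assume T: "w \<in> T \<and> openin S T"
      obtain V where V: "openin X V" "T = V \<inter> Y" using T S_def openin_subtopology by metis
      have "continuous_map X X (\<lambda>x. bc_mult (s,s) x)" using st semitopological_bc_def by auto
      then have P: "openin X {x. bc_mult (s,s) x \<in> V}"
        using openin_continuous_map_preimage[OF _ V(1), of X "bc_mult (s,s)"] top by simp
      have ijP: "bc_mult (s,s) (i,j) \<in> V" using lam_y[OF i_s e] T V wst by auto
      define F where "F = {x \<in> bc_updown (i,j). fst x < s}"
      have finF: "finite F" unfolding F_def by (rule fin_below)
      show "\<exists>y. y \<in> U \<and> y \<in> T"
      proof (rule ccontr)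
        assume nex: "\<not> (\<exists>y. y \<in> U \<and> y \<in> T)"
        have sub: "Op \<inter> {x. bc_mult (s,s) x \<in> V} \<inter> Y \<subseteq> F"
        proof
          fix x assume x: "x \<in> Op \<inter> {x. bc_mult (s,s) x \<in> V} \<inter> Y"
          show "x \<in> F"
          proof (rule ccontr)
            assume "x \<notin> F"
            then have "s \<le> fst x" using x F_def Y_def by auto
            then have "bc_mult (s,s) x = x" using lam_fix by (metis prod.collapse)
            then have "x \<in> U \<and> x \<in> T" using x Op V by auto
            then show False using nex by blast
          qed
        qed
        have "{(i,j)} = (Op \<inter> {x. bc_mult (s,s) x \<in> V} - (F - {(i,j)})) \<inter> Y"
          using sub yY ijP U Op by auto
        moreover have "openin X (Op \<inter> {x. bc_mult (s,s) x \<in> V} - (F - {(i,j)}))"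
          using Op(1) P closed_fin[OF t1 st] finF by auto
        ultimately have "openin S {(i,j)}" unfolding S_def openin_subtopology by blast
        then show False using niso S_def Y_def by simp
      qed
    qed
  qed
  define Tl where "Tl = Y - {x \<in> Y. fst x \<le> i}"
  have Tlo: "openin S Tl"
  proof -
    have "closedin S ({x \<in> Y. fst x \<le> i} \<inter> Y)"
      using closedS fin_below2 Y_def by blast
    then have "openin S (topspace S - ({x \<in> Y. fst x \<le> i} \<inter> Y))" by auto
    moreover have "topspace S - ({x \<in> Y. fst x \<le> i} \<inter> Y) = Tl" using topS Tl_def by auto
    ultimately show ?thesis by simp
  qed
  define z where "z = (i+1, j+1)"
  have zT: "z \<in> Tl" unfolding z_def Tl_def Y_def updown_eq by auto
  have Wo: "openin S (Y - {z})"
  proof -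
    have "closedin S ({z} \<inter> Y)" using closedS by blast
    then have "openin S (topspace S - ({z} \<inter> Y))" by auto
    moreover have "topspace S - ({z} \<inter> Y) = Y - {z}" using topS by auto
    ultimately show ?thesis by simp
  qed
  have "(i,j) \<in> Y - {z}" using yY z_def by auto
  then obtain U where U: "openin S U" "(i,j) \<in> U" "U \<subseteq> Y - {z}"
    "U = S interior_of (S closure_of U)"
    using sr Wo unfolding semiregular_at_def S_def Y_def by blast
  have "Tl \<subseteq> S closure_of U" using claim[OF U(1) U(2)] Tl_def by auto
  then have "Tl \<subseteq> U" using interior_of_maximal[OF _ Tlo] U(4) by blast
  then show False using zT U(3) by auto
qed

theorem lemma5:
  fixes X :: "(nat \<times> nat) topology"
  assumes "t1_space X"
    and "semitopological_bc X"
    and "\<exists>i j. semiregular_at X (bc_updown (i, j)) (i, j)"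
  shows "\<forall>m n. semiregular_at X (bc_updown (m, n)) (m, n)"
proof (intro allI)
  fix m n
  obtain i j where "semiregular_at X (bc_updown (i, j)) (i, j)" using assms(3) by blast
  then have "openin (subtopology X (bc_updown (i,j))) {(i,j)}" using step_A assms by blast
  then have "openin (subtopology X (bc_updown (m,n))) {(m,n)}" using step_B assms by blast
  moreover have "(m,n) \<in> bc_updown (m,n)" unfolding updown_eq by auto
  ultimately show "semiregular_at X (bc_updown (m, n)) (m, n)" using step_C assms by blast
qed

end
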